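(* Let $\mathbb T$ be the unit circle with normalized Haar measure $\mu$, $m_0(z)=\frac1{\sqrt2}(1+z^2)$, $R_{m_0}f(z)=\frac13\sum_{w^3=z}|m_0(w)|^2f(w)$, and $m_0^{(n)}(z)=m_0(z)m_0(z^3)\cdots m_0(z^{3^{n-1}})$. Define $(a_n)_{n\in\mathbb Z}$ by: $a_n=2^{-k}$ if $n$ is even and $3^k+1\le n\le 3^{k+1}-1$ for some $k\ge0$; $a_n=-2^{-k}$ if $n$ is even and $-(3^{k+1}-1)\le n\le-(3^k+1)$ for some $k\ge0$; $a_n=0$ otherwise. Let $h(z)=\sum_{k\in\mathbb Z}a_kz^k$. Then (i) $h\in L^2(\mathbb T,\mu)$ but $h\notin L^\infty(\mathbb T,\mu)$; (ii) $R_{m_0}h=h$; (iii) $\sup_n\int_{\mathbb T}|m_0^{(n)}|^2|h|^2\,d\mu=\infty$. *)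

theory Defs
  imports "HOL-Analysis.Analysis"
begin

definition haar_circle :: "complex measure" where
  "haar_circle = distr (restrict_space lborel {0..1::real}) borel (\<lambda>t. cis (2 * pi * t))"

definition m0 :: "complex \<Rightarrow> complex" where
  "m0 z = complex_of_real (1 / sqrt 2) * (1 + z ^ 2)"

definition R_m0 :: "(complex \<Rightarrow> complex) \<Rightarrow> complex \<Rightarrow> complex" where
  "R_m0 f z = (1 / 3) * (\<Sum>w\<in>{w. w ^ 3 = z}. complex_of_real ((cmod (m0 w))\<^sup>2) * f w)"

definition m0_iter :: "nat \<Rightarrow> complex \<Rightarrow> complex" where
  "m0_iter n z = (\<Prod>j<n. m0 (z ^ (3 ^ j)))"

definition coeff_a :: "int \<Rightarrow> real" where
  "coeff_a n =
    (if even n \<and> (\<exists>k::nat. 3 ^ k + 1 \<le> n \<and> n \<le> 3 ^ (k + 1) - 1)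
     then (1 / 2) ^ (THE k::nat. 3 ^ k + 1 \<le> n \<and> n \<le> 3 ^ (k + 1) - 1)
     else if even n \<and> (\<exists>k::nat. - (3 ^ (k + 1) - 1) \<le> n \<and> n \<le> - (3 ^ k + 1))
     then - ((1 / 2) ^ (THE k::nat. - (3 ^ (k + 1) - 1) \<le> n \<and> n \<le> - (3 ^ k + 1)))
     else 0)"

definition partial_h :: "nat \<Rightarrow> complex \<Rightarrow> complex" where
  "partial_h N z = (\<Sum>k\<in>{- int N..int N}. complex_of_real (coeff_a k) * z powi k)"

text \<open>h is (a representative of) the L^2 limit of the partial sums.\<close>
definition is_h :: "(complex \<Rightarrow> complex) \<Rightarrow> bool" where
  "is_h h \<longleftrightarrow> h \<in> borel_measurable haar_circle \<and>
     (\<lambda>N. \<integral>\<^sup>+ z. ennreal ((cmod (partial_h N z - h z))\<^sup>2) \<partial>haar_circle) \<longlonglongrightarrow> 0"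

end

theory Submission
  imports Defs
begin


lemma block_unique:
  fixes n :: nat
  assumes "3^k < n" "n < 3^(k+1)" "3^j < n" "n < 3^(j+1)"
  shows "k = j"
proof (rule ccontr)
  assume "k \<noteq> j"
  then consider "k < j" | "j < k" by linarith
  then show False
  proof cases
    case 1
    then have "(3::nat)^(k+1) \<le> 3^j" by (intro power_increasing) auto
    with assms show False by linarith
  next
    case 2
    then have "(3::nat)^(j+1) \<le> 3^k" by (intro power_increasing) auto
    with assms show False by linarith
  qed
qed

lemma int_block_iff:
  fixes m :: nat
  shows "(3 ^ k + 1 \<le> int m \<and> int m \<le> 3 ^ (k + 1) - 1) \<longleftrightarrow> (3^k < m \<and> m < 3^(k+1))"
proof -
  have a: "(3::int)^k = int (3^k)" "(3::int)^(k+1) = int (3^(k+1))" by simp_all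
  show ?thesis unfolding a by linarith
qed

lemma odd_pow3: "odd ((3::nat)^k)" by simp

lemma coeff_pos:
  fixes m :: nat
  assumes "3^j \<le> m" "m < 3^(j+1)"
  shows "coeff_a (int m) = (if even m then (1/2)^j else 0)"
proof (cases "even m")
  case True
  have "m \<noteq> 3^j" using True odd_pow3[of j] by metis
  with assms have lt: "3^j < m" by linarith
  have ex: "\<exists>k::nat. 3 ^ k + 1 \<le> int m \<and> int m \<le> 3 ^ (k + 1) - 1"
    using lt assms(2) int_block_iff by blast
  have the: "(THE k::nat. 3 ^ k + 1 \<le> int m \<and> int m \<le> 3 ^ (k + 1) - 1) = j"
  proof (rule the_equality)
    show "3 ^ j + 1 \<le> int m \<and> int m \<le> 3 ^ (j + 1) - 1" using lt assms(2) int_block_iff by blast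
  next
    fix k assume "3 ^ k + 1 \<le> int m \<and> int m \<le> 3 ^ (k + 1) - 1"
    then have "3^k < m \<and> m < 3^(k+1)" using int_block_iff by blast
    then show "k = j" using block_unique lt assms(2) by blast
  qed
  have ev: "even (int m)" using True by simp
  show ?thesis unfolding coeff_a_def using ev ex the True by simp
next
  case False
  then have "odd (int m)" by simp
  then show ?thesis unfolding coeff_a_def using False by simp
qed

lemma coeff_zero: "coeff_a 0 = 0"
proof -
  have "\<not> (3 ^ k + 1 \<le> (0::int))" for k :: nat by (smt (verit) zero_le_power)
  moreover have "\<not> (0::int) \<le> - (3 ^ k + 1)" for k :: nat by (smt (verit) zero_le_power)
  ultimately show ?thesis unfolding coeff_a_def by auto
qed

lemma coeff_neg_nat: "coeff_a (- int m) = - coeff_a (int m)"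
proof (cases "m = 0")
  case True then show ?thesis by (simp add: coeff_zero)
next
  case False
  have n1: "\<not> (3 ^ k + 1 \<le> - int m)" for k :: nat by (smt (verit) zero_le_power of_nat_0_le_iff)
  have n2: "\<not> (- (3 ^ (k + 1) - 1) \<le> int m \<and> int m \<le> - (3 ^ k + 1))" for k :: nat
    using False by (smt (verit) zero_le_power of_nat_0_le_iff)
  have eq: "(- (3 ^ (k + 1) - 1) \<le> - int m \<and> - int m \<le> - (3 ^ k + 1)) \<longleftrightarrow>
     (3 ^ k + 1 \<le> int m \<and> int m \<le> 3 ^ (k + 1) - 1)" for k :: nat by linarith
  have e1: "(\<exists>k::nat. 3 ^ k + 1 \<le> - int m \<and> - int m \<le> 3 ^ (k + 1) - 1) = False" using n1 by blast
  have e2: "(\<exists>k::nat. - (3 ^ (k + 1) - 1) \<le> int m \<and> int m \<le> - (3 ^ k + 1)) = False" using n2 by blast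
  show ?thesis by (simp only: coeff_a_def eq e1 e2 even_minus) simp
qed

lemma coeff_neg: "coeff_a (- n) = - coeff_a n"
proof (cases "n \<ge> 0")
  case True
  then obtain m where "n = int m" by (metis nonneg_eq_int)
  then show ?thesis by (simp add: coeff_neg_nat)
next
  case False
  then obtain m where "n = - int m" by (metis le_cases neg_0_le_iff_le nonneg_eq_int minus_minus)
  then show ?thesis by (simp add: coeff_neg_nat)
qed

lemma block_exists: "(1::nat) \<le> m \<Longrightarrow> \<exists>j. 3^j \<le> m \<and> m < 3^(j+1)"
  using ex_power_ivl1[of 3 m] by auto

lemma coeff_abs_le:
  fixes m :: nat
  assumes "3^j \<le> m" "m < 3^(j+1)"
  shows "\<bar>coeff_a (int m)\<bar> \<le> (1/2)^j"
  using coeff_pos[OF assms] by simp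



lemma partial_cis: "partial_h N (cis \<theta>) = (\<Sum>k\<in>{- int N..int N}. complex_of_real (coeff_a k) * cis (of_int k * \<theta>))"
  unfolding partial_h_def by (simp add: cis_power_int)

lemma cis_minus_cis: "cis x - cis (- x) = 2 * \<i> * complex_of_real (sin x)"
  by (simp add: complex_eq_iff cis.sel)

lemma int_interval_Suc: "{- int (Suc N)..int (Suc N)} = insert (int (Suc N)) (insert (- int (Suc N)) {- int N..int N})"
  by auto

lemma partial_sin: "partial_h N (cis \<theta>) = \<i> * complex_of_real (2 * (\<Sum>n\<in>{1..N}. coeff_a (int n) * sin (real n * \<theta>)))"
proof (induction N)
  case 0
  then show ?case by (simp add: partial_cis coeff_zero)
next
  case (Suc N)
  have "partial_h (Suc N) (cis \<theta>) = complex_of_real (coeff_a (int (Suc N))) * cis (of_int (int (Suc N)) * \<theta>) +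
     (complex_of_real (coeff_a (- int (Suc N))) * cis (of_int (- int (Suc N)) * \<theta>) + partial_h N (cis \<theta>))"
    unfolding partial_cis int_interval_Suc by (subst sum.insert, simp, simp)+ simp
  also have "\<dots> = complex_of_real (coeff_a (int (Suc N))) * cis (real (Suc N) * \<theta>) +
     (complex_of_real (coeff_a (- int (Suc N))) * cis (- (real (Suc N) * \<theta>)) + partial_h N (cis \<theta>))"
    by (simp add: algebra_simps)
  also have "\<dots> = complex_of_real (coeff_a (int (Suc N))) * (cis (real (Suc N) * \<theta>) - cis (- (real (Suc N) * \<theta>))) + partial_h N (cis \<theta>)"
    by (simp only: coeff_neg) (simp add: algebra_simps)
  also have "\<dots> = \<i> * complex_of_real (2 * (\<Sum>n\<in>{1..Suc N}. coeff_a (int n) * sin (real n * \<theta>)))"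
    unfolding cis_minus_cis Suc.IH by (simp add: algebra_simps)
  finally show ?case .
qed

lemma two_sin_sin: "2 * sin (a::real) * sin b = cos (b - a) - cos (b + a)"
  by (simp add: cos_diff cos_add)

lemma telescope_even:
  assumes "odd A"
  shows "2 * sin \<theta> * (\<Sum>n\<in>{A..<A+2*d}. if even n then sin (real n * \<theta>) else 0)
         = cos (real A * \<theta>) - cos (real (A + 2*d) * \<theta>)"
proof (induction d)
  case 0 then show ?case by simp
next
  case (Suc d)
  have split: "{A..<A+2*Suc d} = insert (A+2*d+1) (insert (A+2*d) {A..<A+2*d})" by auto
  have o: "odd (A + 2*d)" using assms by simp
  have e: "even (A + 2*d + 1)" using o by simp
  have "2 * sin \<theta> * (\<Sum>n\<in>{A..<A+2*Suc d}. if even n then sin (real n * \<theta>) else 0)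
     = 2 * sin \<theta> * sin (real (A+2*d+1) * \<theta>) + 2 * sin \<theta> * (\<Sum>n\<in>{A..<A+2*d}. if even n then sin (real n * \<theta>) else 0)"
    unfolding split using o e by (simp add: sum.insert algebra_simps)
  also have "\<dots> = (cos (real (A+2*d) * \<theta>) - cos (real (A + 2*Suc d) * \<theta>)) + (cos (real A * \<theta>) - cos (real (A + 2*d) * \<theta>))"
    unfolding Suc.IH two_sin_sin by (simp add: algebra_simps)
  finally show ?case by simp
qed

lemma block_sum:
  "2 * sin \<theta> * (\<Sum>n\<in>{3^K..<3^(K+1)}. coeff_a (int n) * sin (real n * \<theta>))
     = (1/2)^K * (cos (3^K * \<theta>) - cos (3^(K+1) * \<theta>))"
proof -
  have "(\<Sum>n\<in>{3^K..<3^(K+1)}. coeff_a (int n) * sin (real n * \<theta>))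
      = (\<Sum>n\<in>{3^K..<3^(K+1)}. (1/2)^K * (if even n then sin (real n * \<theta>) else 0))"
  proof (intro sum.cong refl)
    fix x :: nat assume "x \<in> {3^K..<3^(K+1)}"
    then have "(3::nat)^K \<le> x" "x < (3::nat)^(K+1)" by auto
    from coeff_pos[OF this] show "coeff_a (int x) * sin (real x * \<theta>) = (1/2)^K * (if even x then sin (real x * \<theta>) else 0)"
      by simp
  qed
  also have "\<dots> = (1/2)^K * (\<Sum>n\<in>{3^K..<3^K + 2 * 3^K}. if even n then sin (real n * \<theta>) else 0)"
    by (simp add: sum_distrib_left)
  finally have eq: "(\<Sum>n\<in>{3^K..<3^(K+1)}. coeff_a (int n) * sin (real n * \<theta>)) =
      (1/2)^K * (\<Sum>n\<in>{3^K..<3^K + 2 * 3^K}. if even n then sin (real n * \<theta>) else 0)" .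
  define S where "S = (\<Sum>n\<in>{3^K..<3^K + 2 * 3^K}. if even n then sin (real n * \<theta>) else 0)"
  have "2 * sin \<theta> * S = cos (real (3^K) * \<theta>) - cos (real (3^K + 2 * 3^K) * \<theta>)"
    unfolding S_def by (rule telescope_even) simp
  moreover have "real (3^K + 2 * 3^K) = 3^(K+1)" by simp
  ultimately have S: "2 * sin \<theta> * S = cos (3^K * \<theta>) - cos (3^(K+1) * \<theta>)" by simp
  have "2 * sin \<theta> * ((1/2)^K * S) = (1/2)^K * (2 * sin \<theta> * S)" by (simp only: mult_ac)
  then show ?thesis unfolding eq S_def[symmetric] S .
qed

definition TK :: "nat \<Rightarrow> real \<Rightarrow> real" where
  "TK K \<theta> = (\<Sum>n\<in>{1..<3^(K+1)}. coeff_a (int n) * sin (real n * \<theta>))"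

lemma TK_closed:
  "2 * sin \<theta> * TK K \<theta> = cos \<theta> - (\<Sum>j<K. (1/2)^(j+1) * cos (3^(j+1) * \<theta>)) - (1/2)^K * cos (3^(K+1) * \<theta>)"
proof (induction K)
  case 0
  have "{1..<3^(0+1)} = {3^0..<(3::nat)^(0+1)}" by simp
  then have "TK 0 \<theta> = (\<Sum>n\<in>{3^0..<3^(0+1)}. coeff_a (int n) * sin (real n * \<theta>))"
    unfolding TK_def by metis
  then show ?case using block_sum[of \<theta> 0] by simp
next
  case (Suc K)
  have le1: "(1::nat) \<le> 3^(K+1)" by simp
  have le2: "(3::nat)^(K+1) \<le> 3^(Suc K+1)" by (intro power_increasing) auto
  have split: "{1..<(3::nat)^(Suc K+1)} = {1..<3^(K+1)} \<union> {3^(K+1)..<3^(Suc K+1)}"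
    using le1 le2 by auto
  have "TK (Suc K) \<theta> = TK K \<theta> + (\<Sum>n\<in>{3^(K+1)..<3^(Suc K+1)}. coeff_a (int n) * sin (real n * \<theta>))"
    unfolding TK_def split by (subst sum.union_disjoint) auto
  then have "2 * sin \<theta> * TK (Suc K) \<theta> = 2 * sin \<theta> * TK K \<theta> +
     (1/2)^(K+1) * (cos (3^(K+1) * \<theta>) - cos (3^(K+1+1) * \<theta>))"
    using block_sum[of \<theta> "K+1"] by (simp add: algebra_simps)
  then show ?case unfolding Suc.IH by (simp add: algebra_simps)
qed



definition Wf :: "real \<Rightarrow> real" where
  "Wf \<theta> = (\<Sum>k. (1/2)^(k+1) * cos (3^(k+1) * \<theta>))"

definition Wc :: "complex \<Rightarrow> real" where
  "Wc z = (\<Sum>k. (1/2)^(k+1) * Re (z^(3^(k+1))))"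

definition H0 :: "complex \<Rightarrow> complex" where
  "H0 z = \<i> * complex_of_real ((Re z - Wc z) / Im z)"

lemma H0_measurable[measurable]: "H0 \<in> borel_measurable borel"
  unfolding H0_def Wc_def by measurable

lemma Re_cis_pow: "Re (cis \<theta> ^ n) = cos (real n * \<theta>)"
  by (simp add: Complex.DeMoivre)

lemma Wc_cis: "Wc (cis \<theta>) = Wf \<theta>"
  unfolding Wc_def Wf_def Re_cis_pow by simp

lemma H0_cis: "H0 (cis \<theta>) = \<i> * complex_of_real ((cos \<theta> - Wf \<theta>) / sin \<theta>)"
  unfolding H0_def by (simp add: Wc_cis)

lemma summable_half: "summable (\<lambda>k::nat. (1/2::real)^(k+1))"
  using summable_mult[OF summable_geometric[of "1/2::real"], of "1/2"] by simp

lemma suminf_half: "(\<Sum>k::nat. (1/2::real)^(k+1)) = 1"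
  using suminf_mult[OF summable_geometric[of "1/2::real"], of "1/2"] suminf_geometric[of "1/2::real"] by simp

lemma summable_W: "summable (\<lambda>k::nat. (1/2)^(k+1) * cos (3^(k+1) * (\<theta>::real)))"
  by (rule summable_comparison_test[OF _ summable_half]) (auto simp: abs_mult)

lemma partial_TK: "partial_h (3^(K+1) - 1) (cis \<theta>) = \<i> * complex_of_real (2 * TK K \<theta>)"
proof -
  have "{1..(3::nat)^(K+1) - 1} = {1..<3^(K+1)}" by auto
  then show ?thesis unfolding partial_sin TK_def by simp
qed

lemma TK_tendsto:
  assumes "sin \<theta> \<noteq> 0"
  shows "(\<lambda>K. 2 * TK K \<theta>) \<longlonglongrightarrow> (cos \<theta> - Wf \<theta>) / sin \<theta>"
proof -
  have eq: "2 * TK K \<theta> = (cos \<theta> - (\<Sum>j<K. (1/2)^(j+1) * cos (3^(j+1) * \<theta>)) - (1/2)^K * cos (3^(K+1) * \<theta>)) / sin \<theta>" for K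
    using TK_closed[of \<theta> K] assms by (simp add: field_simps)
  have l1: "(\<lambda>K. (\<Sum>j<K. (1/2)^(j+1) * cos (3^(j+1) * \<theta>))) \<longlonglongrightarrow> Wf \<theta>"
    unfolding Wf_def by (rule summable_LIMSEQ[OF summable_W])
  have l2: "(\<lambda>K. (1/2::real)^K * cos (3^(K+1) * \<theta>)) \<longlonglongrightarrow> 0"
  proof (rule Lim_null_comparison[OF _ LIMSEQ_power_zero[of "1/2::real"]])
    show "\<forall>\<^sub>F K in sequentially. norm ((1/2::real)^K * cos (3^(K+1) * \<theta>)) \<le> (1/2)^K"
      by (auto simp: abs_mult intro!: mult_left_le)
  qed simp
  have "(\<lambda>K. (cos \<theta> - (\<Sum>j<K. (1/2)^(j+1) * cos (3^(j+1) * \<theta>)) - (1/2)^K * cos (3^(K+1) * \<theta>)) / sin \<theta>)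
        \<longlonglongrightarrow> (cos \<theta> - Wf \<theta> - 0) / sin \<theta>"
    by (intro tendsto_intros l1 l2 assms)
  then show ?thesis unfolding eq by simp
qed

lemma partial_tendsto_H0:
  assumes "sin \<theta> \<noteq> 0"
  shows "(\<lambda>K. partial_h (3^(K+1) - 1) (cis \<theta>)) \<longlonglongrightarrow> H0 (cis \<theta>)"
  unfolding partial_TK H0_cis
  by (intro tendsto_intros TK_tendsto assms)



abbreviation M0 :: "real measure" where
  "M0 \<equiv> restrict_space lborel {0..1::real}"

lemma sets_M0_Icc: "{0..1::real} \<inter> space lborel \<in> sets lborel" by simp

lemma integrable_M0_cont:
  fixes f :: "real \<Rightarrow> real"
  assumes "continuous_on {0..1} f"
  shows "integrable M0 f"
  unfolding integrable_restrict_space[OF sets_M0_Icc]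
  using borel_integrable_atLeastAtMost'[OF assms] unfolding set_integrable_def .

lemma integral_M0_FTC:
  fixes f F :: "real \<Rightarrow> real"
  assumes "\<And>x. (F has_real_derivative f x) (at x)" "continuous_on {0..1} f"
  shows "integral\<^sup>L M0 f = F 1 - F 0"
proof -
  have "integral\<^sup>L M0 f = integral\<^sup>L lborel (\<lambda>x. indicator {0..1} x *\<^sub>R f x)"
    by (rule integral_restrict_space[OF sets_M0_Icc])
  also have "\<dots> = F 1 - F 0"
    by (rule integral_FTC_atLeastAtMost)
       (auto simp: has_real_derivative_iff_has_vector_derivative[symmetric] intro: has_field_derivative_at_within assms)
  finally show ?thesis .
qed

lemma integral_cos_int:
  fixes m :: int
  shows "integral\<^sup>L M0 (\<lambda>t. cos (of_int m * (2 * pi * t))) = (if m = 0 then 1 else 0)"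
proof (cases "m = 0")
  case True
  have "integral\<^sup>L M0 (\<lambda>t. 1::real) = (\<lambda>t. t) 1 - (\<lambda>t. t) 0"
    by (rule integral_M0_FTC) (auto intro!: derivative_eq_intros)
  then show ?thesis using True by simp
next
  case False
  let ?F = "\<lambda>t. sin (of_int m * (2 * pi * t)) / (of_int m * 2 * pi)"
  have "integral\<^sup>L M0 (\<lambda>t. cos (of_int m * (2 * pi * t))) = ?F 1 - ?F 0"
  proof (rule integral_M0_FTC)
    fix x show "(?F has_real_derivative cos (of_int m * (2 * pi * x))) (at x)"
      using False by (auto intro!: derivative_eq_intros simp: field_simps)
  qed (intro continuous_intros)
  moreover have "sin (of_int m * (2 * pi * 1)) = 0"
    using sin_int_2pin[of m] by (simp add: mult.commute)
  ultimately show ?thesis using False by simp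
qed

lemma cmod_sq_sum:
  fixes c :: "int \<Rightarrow> real"
  shows "(cmod (\<Sum>k\<in>A. complex_of_real (c k) * cis (of_int k * \<theta>)))\<^sup>2
       = (\<Sum>k\<in>A. \<Sum>l\<in>A. c k * c l * cos (of_int (k - l) * \<theta>))"
proof -
  let ?z = "\<Sum>k\<in>A. complex_of_real (c k) * cis (of_int k * \<theta>)"
  have "complex_of_real ((cmod ?z)\<^sup>2) = ?z * cnj ?z" by (rule complex_norm_square)
  also have "\<dots> = (\<Sum>k\<in>A. \<Sum>l\<in>A. complex_of_real (c k * c l) * cis (of_int (k - l) * \<theta>))"
    unfolding cnj_sum sum_product
    by (intro sum.cong refl) (simp add: cis_cnj cis_mult algebra_simps)
  finally have "(cmod ?z)\<^sup>2 = Re (\<Sum>k\<in>A. \<Sum>l\<in>A. complex_of_real (c k * c l) * cis (of_int (k - l) * \<theta>))"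
    by (metis Re_complex_of_real)
  also have "\<dots> = (\<Sum>k\<in>A. \<Sum>l\<in>A. c k * c l * cos (of_int (k - l) * \<theta>))"
    by (simp add: Re_sum)
  finally show ?thesis .
qed

lemma parseval_M0:
  fixes c :: "int \<Rightarrow> real"
  assumes "finite A"
  shows "(\<integral>\<^sup>+ t. ennreal ((cmod (\<Sum>k\<in>A. complex_of_real (c k) * cis (of_int k * (2 * pi * t))))\<^sup>2) \<partial>M0)
        = ennreal (\<Sum>k\<in>A. (c k)\<^sup>2)"
proof -
  have int: "integrable M0 (\<lambda>t. c k * c l * cos (of_int (k - l) * (2 * pi * t)))" for k l
    by (rule integrable_M0_cont) (intro continuous_intros)
  have "(\<integral>\<^sup>+ t. ennreal ((cmod (\<Sum>k\<in>A. complex_of_real (c k) * cis (of_int k * (2 * pi * t))))\<^sup>2) \<partial>M0)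
     = (\<integral>\<^sup>+ t. ennreal (\<Sum>k\<in>A. \<Sum>l\<in>A. c k * c l * cos (of_int (k - l) * (2 * pi * t))) \<partial>M0)"
    unfolding cmod_sq_sum ..
  also have "\<dots> = ennreal (integral\<^sup>L M0 (\<lambda>t. \<Sum>k\<in>A. \<Sum>l\<in>A. c k * c l * cos (of_int (k - l) * (2 * pi * t))))"
  proof (rule nn_integral_eq_integral)
    show "integrable M0 (\<lambda>t. \<Sum>k\<in>A. \<Sum>l\<in>A. c k * c l * cos (of_int (k - l) * (2 * pi * t)))"
      by (intro Bochner_Integration.integrable_sum int)
    show "AE t in M0. 0 \<le> (\<Sum>k\<in>A. \<Sum>l\<in>A. c k * c l * cos (of_int (k - l) * (2 * pi * t)))"
      by (simp only: cmod_sq_sum[symmetric]) simp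
  qed
  also have "integral\<^sup>L M0 (\<lambda>t. \<Sum>k\<in>A. \<Sum>l\<in>A. c k * c l * cos (of_int (k - l) * (2 * pi * t)))
      = (\<Sum>k\<in>A. \<Sum>l\<in>A. c k * c l * integral\<^sup>L M0 (\<lambda>t. cos (of_int (k - l) * (2 * pi * t))))"
    using int by (simp add: Bochner_Integration.integral_sum Bochner_Integration.integrable_sum)
  also have "\<dots> = (\<Sum>k\<in>A. \<Sum>l\<in>A. if l = k then c k * c l else 0)"
    unfolding integral_cos_int by (intro sum.cong refl) auto
  also have "\<dots> = (\<Sum>k\<in>A. (c k)\<^sup>2)"
    using assms by (simp add: power2_eq_square)
  finally show ?thesis .
qed



definition asq :: "nat \<Rightarrow> real" where "asq n = (coeff_a (int n))\<^sup>2"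

lemma asq_nonneg: "0 \<le> asq n" unfolding asq_def by simp

lemma block_sq_sum: "(\<Sum>n\<in>{3^K..<3^(K+1)}. asq n) \<le> 2 * (3/4)^K"
proof -
  have "(\<Sum>n\<in>{3^K..<3^(K+1)}. asq n) \<le> (\<Sum>n\<in>{3^K..<(3::nat)^(K+1)}. (1/4::real)^K)"
  proof (intro sum_mono)
    fix n :: nat assume "n \<in> {3^K..<3^(K+1)}"
    then have "3^K \<le> n" "n < 3^(K+1)" by auto
    from coeff_abs_le[OF this] have "\<bar>coeff_a (int n)\<bar> \<le> (1/2)^K" .
    then have "(coeff_a (int n))\<^sup>2 \<le> ((1/2)^K)\<^sup>2"
      by (metis abs_ge_zero power2_abs power_mono)
    then show "asq n \<le> (1/4)^K" unfolding asq_def by (simp add: power_mult_distrib[symmetric] power2_eq_square power_mult[symmetric] mult.commute)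
  qed
  also have "\<dots> = real (3^(K+1) - 3^K) * (1/4)^K" by simp
  also have "real (3^(K+1) - 3^K) = 2 * 3^K" by simp
  also have "2 * 3^K * (1/4::real)^K = 2 * (3/4)^K" by (simp add: power_divide)
  finally show ?thesis .
qed

lemma geo_sum_le: "(\<Sum>j<K. 2 * (3/4::real)^j) \<le> 8"
proof -
  have "(\<Sum>j<K. (3/4::real)^j) \<le> (\<Sum>j. (3/4::real)^j)"
    by (intro sum_le_suminf summable_geometric) auto
  also have "\<dots> = 4" using suminf_geometric[of "3/4::real"] by simp
  finally show ?thesis by (simp add: sum_distrib_left[symmetric])
qed

lemma asq_pow3_sum: "(\<Sum>n<3^K. asq n) \<le> (\<Sum>j<K. 2 * (3/4::real)^j)"
proof (induction K)
  case 0 then show ?case by (simp add: asq_def coeff_zero)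
next
  case (Suc K)
  have le: "(3::nat)^K \<le> 3^(Suc K)" by simp
  have "{..<(3::nat)^Suc K} = {..<3^K} \<union> {3^K..<3^(K+1)}" using le by auto
  then have "(\<Sum>n<3^Suc K. asq n) = (\<Sum>n<3^K. asq n) + (\<Sum>n\<in>{3^K..<3^(K+1)}. asq n)"
    by (metis sum.union_disjoint finite_lessThan finite_atLeastLessThan ivl_disj_int_one(2))
  also have "\<dots> \<le> (\<Sum>j<K. 2 * (3/4::real)^j) + 2 * (3/4)^K"
    using Suc.IH block_sq_sum by (intro add_mono) auto
  finally show ?case by simp
qed

lemma summable_asq: "summable asq"
proof (rule summableI_nonneg_bounded[of _ 8])
  fix n
  have "n < 2^n" by (rule less_exp)
  also have "(2::nat)^n \<le> 3^n" by (rule power_mono) auto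
  finally have "n \<le> 3^n" by simp
  then have "(\<Sum>i<n. asq i) \<le> (\<Sum>i<3^n. asq i)"
    by (intro sum_mono2) (auto simp: asq_nonneg)
  also have "\<dots> \<le> 8" using asq_pow3_sum geo_sum_le order_trans by blast
  finally show "(\<Sum>i<n. asq i) \<le> 8" .
qed (rule asq_nonneg)

definition tail :: "nat \<Rightarrow> real" where "tail N = (\<Sum>n. asq (n + Suc N))"

lemma tail_tendsto: "tail \<longlonglongrightarrow> 0"
proof -
  have eq: "tail N = suminf asq - (\<Sum>i<Suc N. asq i)" for N
    using suminf_split_initial_segment[OF summable_asq, of "Suc N"] unfolding tail_def by simp
  have "(\<lambda>N. \<Sum>i<Suc N. asq i) \<longlonglongrightarrow> suminf asq"
    using summable_LIMSEQ[OF summable_asq] by (rule LIMSEQ_Suc)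
  then have "(\<lambda>N. suminf asq - (\<Sum>i<Suc N. asq i)) \<longlonglongrightarrow> suminf asq - suminf asq"
    by (intro tendsto_intros)
  then show ?thesis unfolding eq by simp
qed

lemma partial_sum_le_tail:
  assumes "N \<le> M"
  shows "(\<Sum>n\<in>{N<..M}. asq n) \<le> tail N"
proof -
  have "{N<..M} = (\<lambda>n. n + Suc N) ` {..<M - N}"
  proof (intro equalityI subsetI)
    fix x assume "x \<in> {N<..M}"
    then have "x = (x - Suc N) + Suc N" "x - Suc N \<in> {..<M - N}" by auto
    then show "x \<in> (\<lambda>n. n + Suc N) ` {..<M - N}" by (rule image_eqI)
  qed auto
  then have "(\<Sum>n\<in>{N<..M}. asq n) = (\<Sum>n<M - N. asq (n + Suc N))"
    by (simp add: sum.reindex inj_on_def)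
  also have "\<dots> \<le> tail N" unfolding tail_def
    by (intro sum_le_suminf summable_ignore_initial_segment summable_asq) (auto simp: asq_nonneg)
  finally show ?thesis .
qed

lemma diff_set_sum:
  "(\<Sum>k\<in>{- int (N + d)..int (N + d)} - {- int N..int N}. (coeff_a k)\<^sup>2) = 2 * (\<Sum>n\<in>{N<..N+d}. asq n)"
proof (induction d)
  case 0 then show ?case by simp
next
  case (Suc d)
  let ?X = "{- int (N + d)..int (N + d)} - {- int N..int N}"
  have s0: "{- int (N + Suc d)..int (N + Suc d)} = insert (int (N + Suc d)) (insert (- int (N + Suc d)) {- int (N + d)..int (N + d)})"
    using int_interval_Suc[of "N+d"] by simp
  have s: "{- int (N + Suc d)..int (N + Suc d)} - {- int N..int N} =
     insert (int (N + Suc d)) (insert (- int (N + Suc d)) ?X)"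
    unfolding s0 by (simp add: insert_Diff_if)
  have s2: "{N<..N + Suc d} = insert (N + Suc d) {N<..N+d}" by auto
  have n1: "int (N + Suc d) \<notin> insert (- int (N + Suc d)) ?X" by auto
  have n2: "- int (N + Suc d) \<notin> ?X" by auto
  have n3: "N + Suc d \<notin> {N<..N+d}" by auto
  have "(\<Sum>k\<in>{- int (N + Suc d)..int (N + Suc d)} - {- int N..int N}. (coeff_a k)\<^sup>2)
     = (coeff_a (int (N + Suc d)))\<^sup>2 + ((coeff_a (- int (N + Suc d)))\<^sup>2 + (\<Sum>k\<in>?X. (coeff_a k)\<^sup>2))"
    unfolding s using n1 n2 by (simp add: sum.insert)
  also have "\<dots> = 2 * asq (N + Suc d) + 2 * (\<Sum>n\<in>{N<..N+d}. asq n)"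
    unfolding Suc.IH coeff_neg asq_def by simp
  also have "\<dots> = 2 * (\<Sum>n\<in>{N<..N + Suc d}. asq n)"
    unfolding s2 using n3 by (simp add: sum.insert algebra_simps)
  finally show ?case .
qed

abbreviation cc :: "real \<Rightarrow> complex" where "cc t \<equiv> cis (2 * pi * t)"

lemma partial_cc: "partial_h N (cc t) = (\<Sum>k\<in>{- int N..int N}. complex_of_real (coeff_a k) * cis (of_int k * (2 * pi * t)))"
  by (rule partial_cis)

lemma L2_diff:
  assumes "N \<le> M"
  shows "(\<integral>\<^sup>+ t. ennreal ((cmod (partial_h M (cc t) - partial_h N (cc t)))\<^sup>2) \<partial>M0) \<le> ennreal (2 * tail N)"
proof -
  obtain d where M: "M = N + d" using assms le_Suc_ex by blast
  have sub: "{- int N..int N} \<subseteq> {- int M..int M}" using assms by auto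
  have "partial_h M (cc t) - partial_h N (cc t) =
     (\<Sum>k\<in>{- int M..int M} - {- int N..int N}. complex_of_real (coeff_a k) * cis (of_int k * (2 * pi * t)))" for t
    unfolding partial_cc by (simp add: sum_diff[OF _ sub])
  then have "(\<integral>\<^sup>+ t. ennreal ((cmod (partial_h M (cc t) - partial_h N (cc t)))\<^sup>2) \<partial>M0)
     = ennreal (\<Sum>k\<in>{- int M..int M} - {- int N..int N}. (coeff_a k)\<^sup>2)"
    by (simp add: parseval_M0)
  also have "\<dots> = ennreal (2 * (\<Sum>n\<in>{N<..M}. asq n))" unfolding M diff_set_sum ..
  also have "\<dots> \<le> ennreal (2 * tail N)"
    using partial_sum_le_tail[OF assms] by (intro ennreal_leI) simp
  finally show ?thesis .
qed



lemma cc_measurable[measurable]: "cc \<in> measurable M0 borel"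
proof -
  have "cc \<in> borel_measurable borel" by (intro borel_measurable_continuous_onI continuous_intros)
  then show ?thesis by (intro measurable_restrict_space1) simp
qed

lemma sets_haar[simp]: "sets haar_circle = sets borel"
  unfolding haar_circle_def by simp

lemma space_haar[simp]: "space haar_circle = UNIV"
  unfolding haar_circle_def by simp

lemma measurable_haar_eq: "measurable haar_circle N = measurable borel N"
  by (rule measurable_cong_sets) simp_all

lemma measurable_haar_iff: "f \<in> borel_measurable haar_circle \<longleftrightarrow> f \<in> borel_measurable borel"
  by (simp only: measurable_haar_eq)

lemma nn_haar:
  assumes "f \<in> borel_measurable borel"
  shows "(\<integral>\<^sup>+ z. f z \<partial>haar_circle) = (\<integral>\<^sup>+ t. f (cc t) \<partial>M0)"
  unfolding haar_circle_def
  by (rule nn_integral_distr) (auto simp: measurable_haar_iff[unfolded haar_circle_def] assms)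

lemma partial_h_measurable[measurable]: "partial_h N \<in> borel_measurable borel"
  unfolding partial_h_def power_int_def by measurable

lemma AE_sin_M0: "AE t in M0. sin (2 * pi * t) \<noteq> 0"
proof -
  have "AE t in lborel. sin (2 * pi * t) \<noteq> 0"
  proof (rule AE_I')
    show "(\<lambda>k::int. real_of_int k / 2) ` UNIV \<in> null_sets lborel"
      by (intro countable_imp_null_set_lborel countable_image) simp
    show "{t \<in> space lborel. \<not> sin (2 * pi * t) \<noteq> 0} \<subseteq> (\<lambda>k::int. real_of_int k / 2) ` UNIV"
    proof
      fix t assume "t \<in> {t \<in> space lborel. \<not> sin (2 * pi * t) \<noteq> 0}"
      then have "sin ((2 * t) * pi) = 0" by (simp add: mult_ac)
      then have "2 * t \<in> \<int>" by (simp add: sin_times_pi_eq_0)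
      then obtain k where "2 * t = real_of_int k" by (auto elim: Ints_cases)
      then show "t \<in> (\<lambda>k::int. real_of_int k / 2) ` UNIV" by (intro image_eqI[of _ _ k]) auto
    qed
  qed
  then show ?thesis by (subst AE_restrict_space_iff) (auto elim: AE_mp)
qed

lemma fatou_bound:
  "(\<integral>\<^sup>+ t. ennreal ((cmod (partial_h N (cc t) - H0 (cc t)))\<^sup>2) \<partial>M0) \<le> ennreal (2 * tail N)"
proof -
  let ?u = "\<lambda>K t. ennreal ((cmod (partial_h N (cc t) - partial_h (3^(K+1) - 1) (cc t)))\<^sup>2)"
  have ae: "AE t in M0. ennreal ((cmod (partial_h N (cc t) - H0 (cc t)))\<^sup>2) = liminf (\<lambda>K. ?u K t)"
    using AE_sin_M0
  proof (rule AE_mp, intro AE_I2 impI)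
    fix t assume "sin (2 * pi * t) \<noteq> 0"
    then have "(\<lambda>K. (cmod (partial_h N (cc t) - partial_h (3^(K+1) - 1) (cc t)))\<^sup>2) \<longlonglongrightarrow> (cmod (partial_h N (cc t) - H0 (cc t)))\<^sup>2"
      by (intro tendsto_intros partial_tendsto_H0)
    then have "(\<lambda>K. ?u K t) \<longlonglongrightarrow> ennreal ((cmod (partial_h N (cc t) - H0 (cc t)))\<^sup>2)"
      by (rule tendsto_ennrealI)
    then show "ennreal ((cmod (partial_h N (cc t) - H0 (cc t)))\<^sup>2) = liminf (\<lambda>K. ?u K t)"
      by (intro lim_imp_Liminf[symmetric]) auto
  qed
  have "(\<integral>\<^sup>+ t. ennreal ((cmod (partial_h N (cc t) - H0 (cc t)))\<^sup>2) \<partial>M0) = (\<integral>\<^sup>+ t. liminf (\<lambda>K. ?u K t) \<partial>M0)"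
    by (rule nn_integral_cong_AE[OF ae])
  also have "\<dots> \<le> liminf (\<lambda>K. \<integral>\<^sup>+ t. ?u K t \<partial>M0)"
    by (rule nn_integral_liminf) measurable
  also have "\<dots> \<le> limsup (\<lambda>K. \<integral>\<^sup>+ t. ?u K t \<partial>M0)"
    by (rule Liminf_le_Limsup) simp
  also have "\<dots> \<le> ennreal (2 * tail N)"
  proof (rule Limsup_bounded)
    have "eventually (\<lambda>K. N \<le> 3^(K+1) - 1) sequentially"
    proof (rule eventually_sequentiallyI[of N])
      fix K assume "N \<le> K"
      have "K < 2^K" by (rule less_exp)
      also have "(2::nat)^K \<le> 3^K" by (rule power_mono) auto
      finally show "N \<le> 3^(K+1) - 1" using \<open>N \<le> K\<close> by simp
    qed
    then show "eventually (\<lambda>K. (\<integral>\<^sup>+ t. ?u K t \<partial>M0) \<le> ennreal (2 * tail N)) sequentially"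
    proof (rule eventually_mono)
      fix K assume "N \<le> 3^(K+1) - 1"
      from L2_diff[OF this] show "(\<integral>\<^sup>+ t. ?u K t \<partial>M0) \<le> ennreal (2 * tail N)"
        by (simp add: norm_minus_commute)
    qed
  qed
  finally show ?thesis .
qed



lemma L2_H0_haar:
  "(\<integral>\<^sup>+ z. ennreal ((cmod (partial_h N z - H0 z))\<^sup>2) \<partial>haar_circle) \<le> ennreal (2 * tail N)"
proof -
  have "(\<integral>\<^sup>+ z. ennreal ((cmod (partial_h N z - H0 z))\<^sup>2) \<partial>haar_circle) =
    (\<integral>\<^sup>+ t. ennreal ((cmod (partial_h N (cc t) - H0 (cc t)))\<^sup>2) \<partial>M0)"
    by (rule nn_haar) measurable
  then show ?thesis using fatou_bound[of N] by simp
qed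

lemma is_h_H0: "is_h H0"
  unfolding is_h_def
proof
  show "H0 \<in> borel_measurable haar_circle" unfolding measurable_haar_iff by simp
  have lim: "(\<lambda>N. ennreal (2 * tail N)) \<longlonglongrightarrow> ennreal (2 * 0)"
    by (intro tendsto_ennrealI tendsto_intros tail_tendsto)
  show "(\<lambda>N. \<integral>\<^sup>+ z. ennreal ((cmod (partial_h N z - H0 z))\<^sup>2) \<partial>haar_circle) \<longlonglongrightarrow> 0"
  proof (rule tendsto_sandwich[where f="\<lambda>_. 0" and h="\<lambda>N. ennreal (2 * tail N)"])
    show "\<forall>\<^sub>F N in sequentially. 0 \<le> (\<integral>\<^sup>+ z. ennreal ((cmod (partial_h N z - H0 z))\<^sup>2) \<partial>haar_circle)" by simp
    show "\<forall>\<^sub>F N in sequentially. (\<integral>\<^sup>+ z. ennreal ((cmod (partial_h N z - H0 z))\<^sup>2) \<partial>haar_circle) \<le> ennreal (2 * tail N)"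
      by (intro always_eventually allI L2_H0_haar)
    show "(\<lambda>N. ennreal (2 * tail N)) \<longlonglongrightarrow> 0" using lim by simp
  qed simp
qed

lemma sq_tri: "(cmod (a - b))\<^sup>2 \<le> 2 * (cmod (c - a))\<^sup>2 + 2 * (cmod (c - b))\<^sup>2"
proof -
  have "a - b = (c - b) - (c - a)" by simp
  then have "cmod (a - b) \<le> cmod (c - b) + cmod (c - a)"
    using norm_triangle_ineq4[of "c - b" "c - a"] by simp
  then have "(cmod (a - b))\<^sup>2 \<le> (cmod (c - a) + cmod (c - b))\<^sup>2"
    by (intro power_mono) (simp_all add: add.commute)
  also have "\<dots> \<le> 2 * (cmod (c - a))\<^sup>2 + 2 * (cmod (c - b))\<^sup>2"
    using sum_squares_bound[of "cmod (c - a)" "cmod (c - b)"] by (simp add: power2_sum)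
  finally show ?thesis .
qed

lemma is_h_unique:
  assumes "is_h h"
  shows "AE z in haar_circle. h z = H0 z"
proof -
  have hm: "h \<in> borel_measurable borel" using assms unfolding is_h_def measurable_haar_iff by simp
  let ?X = "\<lambda>N. \<integral>\<^sup>+ z. ennreal ((cmod (partial_h N z - h z))\<^sup>2) \<partial>haar_circle"
  let ?Y = "\<lambda>N. \<integral>\<^sup>+ z. ennreal ((cmod (partial_h N z - H0 z))\<^sup>2) \<partial>haar_circle"
  let ?I = "\<integral>\<^sup>+ z. ennreal ((cmod (h z - H0 z))\<^sup>2) \<partial>haar_circle"
  have X: "?X \<longlonglongrightarrow> 0" using assms unfolding is_h_def by simp
  have Y: "?Y \<longlonglongrightarrow> 0" using is_h_H0 unfolding is_h_def by simp
  have le: "?I \<le> 2 * ?X N + 2 * ?Y N" for N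
  proof -
    have "?I \<le> (\<integral>\<^sup>+ z. 2 * ennreal ((cmod (partial_h N z - h z))\<^sup>2) + 2 * ennreal ((cmod (partial_h N z - H0 z))\<^sup>2) \<partial>haar_circle)"
    proof (rule nn_integral_mono)
      fix z
      have "ennreal ((cmod (h z - H0 z))\<^sup>2) \<le> ennreal (2 * (cmod (partial_h N z - h z))\<^sup>2 + 2 * (cmod (partial_h N z - H0 z))\<^sup>2)"
        by (intro ennreal_leI sq_tri)
      also have "\<dots> = 2 * ennreal ((cmod (partial_h N z - h z))\<^sup>2) + 2 * ennreal ((cmod (partial_h N z - H0 z))\<^sup>2)"
        by (simp add: ennreal_plus ennreal_mult)
      finally show "ennreal ((cmod (h z - H0 z))\<^sup>2) \<le> 2 * ennreal ((cmod (partial_h N z - h z))\<^sup>2) + 2 * ennreal ((cmod (partial_h N z - H0 z))\<^sup>2)" .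
    qed
    also have "\<dots> = 2 * ?X N + 2 * ?Y N"
      using hm by (simp add: nn_integral_add nn_integral_cmult measurable_haar_iff)
    finally show ?thesis .
  qed
  have "(\<lambda>N. 2 * ?X N + 2 * ?Y N) \<longlonglongrightarrow> 2 * 0 + 2 * 0"
    by (intro tendsto_intros X Y) auto
  then have "?I \<le> 0" using le by (intro LIMSEQ_le_const[where X="\<lambda>N. 2 * ?X N + 2 * ?Y N"]) auto
  then have "?I = 0" by simp
  then have "AE z in haar_circle. ennreal ((cmod (h z - H0 z))\<^sup>2) = 0"
    using hm by (subst (asm) nn_integral_0_iff_AE) (auto simp: measurable_haar_iff)
  then show ?thesis by (rule AE_mp) (auto intro: AE_I2)
qed

lemma partial_h_0: "partial_h 0 z = 0"
  unfolding partial_h_def by (simp add: coeff_zero)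

lemma integrable_H0_sq: "integrable haar_circle (\<lambda>z. (cmod (H0 z))\<^sup>2)"
proof (rule integrableI_bounded)
  show "(\<lambda>z. (cmod (H0 z))\<^sup>2) \<in> borel_measurable haar_circle" unfolding measurable_haar_iff by simp
  have "(\<integral>\<^sup>+ z. ennreal (norm ((cmod (H0 z))\<^sup>2)) \<partial>haar_circle) = (\<integral>\<^sup>+ z. ennreal ((cmod (partial_h 0 z - H0 z))\<^sup>2) \<partial>haar_circle)"
    by (simp add: partial_h_0)
  also have "\<dots> \<le> ennreal (2 * tail 0)" by (rule L2_H0_haar)
  also have "\<dots> < \<infinity>" by simp
  finally show "(\<integral>\<^sup>+ z. ennreal (norm ((cmod (H0 z))\<^sup>2)) \<partial>haar_circle) < \<infinity>" .
qed

lemma integrable_h_sq: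
  assumes "is_h h"
  shows "integrable haar_circle (\<lambda>z. (cmod (h z))\<^sup>2)"
proof (rule integrable_cong_AE_imp[OF integrable_H0_sq])
  show "(\<lambda>z. (cmod (h z))\<^sup>2) \<in> borel_measurable haar_circle"
  proof -
    have [measurable]: "h \<in> borel_measurable haar_circle" using assms unfolding is_h_def by simp
    show ?thesis by measurable
  qed
  show "AE z in haar_circle. (cmod (H0 z))\<^sup>2 = (cmod (h z))\<^sup>2"
    using is_h_unique[OF assms] by (rule AE_mp) (auto intro: AE_I2)
qed



lemma one_minus_cos_le: "1 - cos (x::real) \<le> x\<^sup>2 / 2"
proof -
  have "cos x = cos (2 * (x/2))" by simp
  also have "\<dots> = 1 - 2 * (sin (x/2))\<^sup>2" by (rule cos_double_sin)
  finally have c: "1 - cos x = 2 * (sin (x/2))\<^sup>2" by simp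
  have "\<bar>sin (x/2)\<bar> \<le> \<bar>x/2\<bar>" by (rule abs_sin_x_le_abs_x)
  then have "(sin (x/2))\<^sup>2 \<le> (x/2)\<^sup>2" by (metis abs_ge_zero power2_abs power_mono)
  then show ?thesis unfolding c by (simp add: power_divide)
qed

lemma one_minus_W:
  "1 - Wf \<theta> = (\<Sum>k. (1/2)^(k+1) * (1 - cos (3^(k+1) * \<theta>)))"
proof -
  have "1 - Wf \<theta> = (\<Sum>k::nat. (1/2::real)^(k+1)) - (\<Sum>k. (1/2)^(k+1) * cos (3^(k+1) * \<theta>))"
    unfolding suminf_half Wf_def ..
  also have "\<dots> = (\<Sum>k. (1/2)^(k+1) - (1/2)^(k+1) * cos (3^(k+1) * \<theta>))"
    by (rule suminf_diff[OF summable_half summable_W])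
  finally show ?thesis by (simp add: algebra_simps)
qed

lemma W_lower:
  assumes "1 \<le> K"
  shows "(1/2)^K * (1 - cos (3^K * \<theta>)) \<le> 1 - Wf \<theta>"
proof -
  let ?f = "\<lambda>k. (1/2::real)^(k+1) * (1 - cos (3^(k+1) * \<theta>))"
  have sf: "summable ?f"
    using summable_diff[OF summable_half summable_W[of \<theta>]] by (simp add: algebra_simps)
  have "sum ?f {K - 1} \<le> suminf ?f"
    by (rule sum_le_suminf[OF sf]) auto
  then show ?thesis unfolding one_minus_W using assms by simp
qed

lemma H0_lower:
  assumes K: "2 \<le> K" and th: "pi / (2 * 3^K) \<le> \<theta>" "\<theta> \<le> pi / 3^K"
  shows "(3/2)^K / (2 * pi) \<le> cmod (H0 (cis \<theta>))"
proof -
  have p3: "(0::real) < 3^K" by simp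
  have "pi / 2 \<le> 3^K * \<theta>" using th(1) p3 by (simp add: field_simps)
  moreover have "3^K * \<theta> \<le> pi" using th(2) p3 by (simp add: field_simps)
  ultimately have "0 \<le> cos (pi - 3^K * \<theta>)" by (intro cos_ge_zero) auto
  then have c0: "cos (3^K * \<theta>) \<le> 0" by simp
  have Wl: "(1/2)^K \<le> 1 - Wf \<theta>"
  proof -
    have a: "(1/2::real)^K \<le> (1/2)^K * (1 - cos (3^K * \<theta>))"
      using mult_left_mono[of 1 "1 - cos (3^K * \<theta>)" "(1/2::real)^K"] c0 by simp
    have "1 \<le> K" using K by simp
    from W_lower[OF this, of \<theta>] a show ?thesis by linarith
  qed
  have tpos: "0 < \<theta>" by (rule order_less_le_trans[OF _ th(1)]) simp
  have "\<theta>\<^sup>2 \<le> (pi / 3^K)\<^sup>2" using th(2) tpos by (intro power_mono) auto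
  also have "\<dots> = pi\<^sup>2 / ((3::real)^K)\<^sup>2" by (rule power_divide)
  also have "((3::real)^K)\<^sup>2 = 9^K" by (simp add: power2_eq_square power_mult_distrib[symmetric])
  finally have th2: "\<theta>\<^sup>2 \<le> pi\<^sup>2 / 9^K" .
  have "pi\<^sup>2 \<le> (4::real)\<^sup>2" using pi_less_4 pi_gt_zero by (intro power_mono) auto
  then have pi2: "pi\<^sup>2 \<le> 16" by simp
  have "(9/2::real)^2 \<le> (9/2)^K" using K by (intro power_increasing) auto
  moreover have "(16::real) \<le> (9/2)^2" by (simp add: power2_eq_square)
  ultimately have "16 \<le> (9/2::real)^K" by linarith
  then have "pi\<^sup>2 \<le> (9/2::real)^K" using pi2 by simp
  then have "pi\<^sup>2 / 9^K \<le> (9/2)^K / 9^K" by (intro divide_right_mono) auto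
  also have "(9/2::real)^K / 9^K = (1/2)^K" by (simp add: power_divide)
  finally have "pi\<^sup>2 / 9^K \<le> (1/2)^K" .
  then have "1 - cos \<theta> \<le> (1/2)^K / 2" using one_minus_cos_le[of \<theta>] th2 by simp
  then have num: "(1/2)^K / 2 \<le> cos \<theta> - Wf \<theta>" using Wl by simp
  have "(1::real) < 3^K" using K by (intro one_less_power) auto
  then have "pi / 3^K < pi" by (simp add: divide_less_eq)
  then have "\<theta> < pi" using th(2) by simp
  then have spos: "0 < sin \<theta>" using tpos by (intro sin_gt_zero)
  have sle: "sin \<theta> \<le> pi / 3^K" using sin_x_le_x[of \<theta>] tpos th(2) by simp
  have "(3/2)^K / (2 * pi) = ((1/2)^K / 2) / (pi / 3^K)"
    by (simp add: power_divide field_simps)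
  also have "\<dots> \<le> ((1/2)^K / 2) / sin \<theta>"
    using spos sle by (intro divide_left_mono) auto
  also have "\<dots> \<le> (cos \<theta> - Wf \<theta>) / sin \<theta>"
    using spos num by (intro divide_right_mono) auto
  also have "\<dots> \<le> \<bar>(cos \<theta> - Wf \<theta>) / sin \<theta>\<bar>" by (rule abs_ge_self)
  also have "\<dots> = cmod (H0 (cis \<theta>))"
    unfolding H0_cis by (simp only: norm_mult norm_ii norm_of_real mult_1)
  finally show ?thesis .
qed

lemma m0_cis_sq: "(cmod (m0 (cis \<phi>)))\<^sup>2 = 2 * (cos \<phi>)\<^sup>2"
proof -
  have "m0 (cis \<phi>) = complex_of_real (1 / sqrt 2) * (1 + cis (2 * \<phi>))"
    unfolding m0_def by (simp add: Complex.DeMoivre)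
  then have "(cmod (m0 (cis \<phi>)))\<^sup>2 = (1/2) * ((1 + cos (2*\<phi>))\<^sup>2 + (sin (2*\<phi>))\<^sup>2)"
    by (simp add: norm_mult cmod_power2 power_mult_distrib power_divide)
  also have "\<dots> = 1 + cos (2 * \<phi>)"
    using sin_cos_squared_add[of "2*\<phi>"] by (simp add: power2_sum algebra_simps)
  also have "\<dots> = 2 * (cos \<phi>)\<^sup>2" by (simp add: cos_double sin_squared_eq)
  finally show ?thesis .
qed

lemma m0_iter_cis_sq: "(cmod (m0_iter n (cis \<theta>)))\<^sup>2 = (\<Prod>j<n. 2 * (cos (3^j * \<theta>))\<^sup>2)"
proof -
  have "(cmod (m0_iter n (cis \<theta>)))\<^sup>2 = (\<Prod>j<n. (cmod (m0 (cis \<theta> ^ 3^j)))\<^sup>2)"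
    unfolding m0_iter_def by (simp add: prod_norm[symmetric] prod_power_distrib)
  also have "\<dots> = (\<Prod>j<n. 2 * (cos (3^j * \<theta>))\<^sup>2)"
    by (intro prod.cong refl) (simp add: Complex.DeMoivre m0_cis_sq)
  finally show ?thesis .
qed

lemma cos_ge_09: assumes "0 \<le> (x::real)" "x \<le> 4/9" shows "9/10 \<le> cos x"
proof -
  have "x\<^sup>2 \<le> (4/9)\<^sup>2" using assms by (intro power_mono) auto
  then show ?thesis using one_minus_cos_le[of x] by (simp add: power_divide)
qed

lemma m0_iter_lower:
  assumes "0 \<le> \<theta>" "\<theta> \<le> pi / 3^(n+1)"
  shows "(8/5::real)^n \<le> (cmod (m0_iter n (cis \<theta>)))\<^sup>2"
proof -
  have "(8/5::real)^n = (\<Prod>j<n. 8/5)" by simp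
  also have "\<dots> \<le> (\<Prod>j<n. 2 * (cos (3^j * \<theta>))\<^sup>2)"
  proof (rule prod_mono)
    fix j assume "j \<in> {..<n}"
    then have j: "j + 2 \<le> n + 1" by simp
    have "(3::real)^j * 9 = 3^(j+2)" by (simp add: power_add)
    also have "\<dots> \<le> 3^(n+1)" using j by (intro power_increasing) auto
    finally have "(3::real)^j * 9 \<le> 3^(n+1)" .
    then have "3^j * \<theta> \<le> 3^j * (pi / 3^(n+1))" using assms by (intro mult_left_mono) auto
    also have "\<dots> \<le> 3^j * (pi / (3^j * 9))"
      using \<open>(3::real)^j * 9 \<le> 3^(n+1)\<close> by (intro mult_left_mono divide_left_mono) auto
    also have "\<dots> = pi / 9" by simp
    also have "\<dots> \<le> 4/9" using pi_less_4 by simp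
    finally have "9/10 \<le> cos (3^j * \<theta>)" using assms by (intro cos_ge_09) auto
    then have "(9/10)\<^sup>2 \<le> (cos (3^j * \<theta>))\<^sup>2" by (intro power_mono) auto
    then show "0 \<le> (8/5::real) \<and> 8/5 \<le> 2 * (cos (3^j * \<theta>))\<^sup>2" by (simp add: power2_eq_square)
  qed
  finally show ?thesis unfolding m0_iter_cis_sq .
qed



definition IK :: "nat \<Rightarrow> real set" where
  "IK K = {1 / (4 * 3^K) .. 1 / (2 * 3^K)}"

lemma IK_sub: "IK K \<subseteq> {0..1}"
proof
  fix t assume "t \<in> IK K"
  then have t: "1 / (4 * 3^K) \<le> t" "t \<le> 1 / (2 * 3^K)" unfolding IK_def by auto
  have a: "(0::real) \<le> 1 / (4 * 3^K)" by simp
  have "(1::real) \<le> 3^K" by simp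
  then have "(1::real) \<le> 2 * 3^K" by linarith
  then have b: "1 / (2 * 3^K) \<le> (1::real)" by simp
  show "t \<in> {0..1}" unfolding atLeastAtMost_iff using t a b by linarith
qed

lemma IK_sets: "IK K \<in> sets M0"
  using IK_sub by (subst sets_restrict_space_iff) (auto simp: IK_def)

lemma emeasure_IK: "emeasure M0 (IK K) = ennreal (1 / (4 * 3^K))"
proof -
  have "emeasure M0 (IK K) = emeasure lborel (IK K)"
    by (rule emeasure_restrict_space) (use IK_sub in auto)
  also have "\<dots> = ennreal (1 / (2 * 3^K) - 1 / (4 * 3^K))"
    unfolding IK_def by (subst emeasure_lborel_Icc) (auto simp: field_simps)
  also have "1 / (2 * 3^K) - 1 / (4 * 3^K) = 1 / (4 * (3::real)^K)" by (simp add: field_simps)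
  finally show ?thesis .
qed

lemma IK_theta:
  assumes "t \<in> IK K"
  shows "pi / (2 * 3^K) \<le> 2 * pi * t" "2 * pi * t \<le> pi / 3^K"
proof -
  from assms have t: "1 / (4 * 3^K) \<le> t" "t \<le> 1 / (2 * 3^K)" unfolding IK_def by auto
  have "2 * pi * (1 / (4 * 3^K)) \<le> 2 * pi * t" using t(1) by (intro mult_left_mono) auto
  then show "pi / (2 * 3^K) \<le> 2 * pi * t" by simp
  have "2 * pi * t \<le> 2 * pi * (1 / (2 * 3^K))" using t(2) by (intro mult_left_mono) auto
  then show "2 * pi * t \<le> pi / 3^K" by simp
qed

lemma H0_lower_IK:
  assumes "2 \<le> K" "t \<in> IK K"
  shows "(3/2)^K / (2 * pi) \<le> cmod (H0 (cc t))"
  using H0_lower[OF assms(1) IK_theta[OF assms(2)]] .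

lemma AE_haar_to_M0:
  assumes "AE z in haar_circle. P z"
  shows "AE t in M0. P (cc t)"
  using assms unfolding haar_circle_def by (rule AE_distrD[OF cc_measurable])

lemma IK_null_contra:
  assumes "AE t in M0. t \<notin> IK K"
  shows False
proof -
  have "emeasure M0 (IK K) = (\<integral>\<^sup>+ t. indicator (IK K) t \<partial>M0)"
    by (rule nn_integral_indicator[symmetric, OF IK_sets])
  also have "\<dots> = (\<integral>\<^sup>+ t. 0 \<partial>M0)"
    by (rule nn_integral_cong_AE) (use assms in \<open>auto elim: AE_mp intro: AE_I2\<close>)
  finally have "emeasure M0 (IK K) = 0" by simp
  then show False unfolding emeasure_IK by simp
qed

lemma H0_unbounded: "\<not> (AE t in M0. cmod (H0 (cc t)) \<le> C)"
proof
  assume ae: "AE t in M0. cmod (H0 (cc t)) \<le> C"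
  obtain n where n: "2 * pi * \<bar>C\<bar> < (3/2::real)^n" using real_arch_pow[of "3/2"] by auto
  let ?K = "n + 2"
  have "(3/2::real)^n \<le> (3/2)^?K" by (intro power_increasing) auto
  have p: "0 < 2 * pi" by simp
  have "\<bar>C\<bar> < (3/2::real)^n / (2 * pi)" using n p by (simp add: pos_less_divide_eq mult.commute)
  also have "\<dots> \<le> (3/2)^?K / (2 * pi)" using \<open>(3/2::real)^n \<le> (3/2)^?K\<close> p by (intro divide_right_mono) auto
  finally have lt: "C < (3/2)^?K / (2 * pi)" by simp
  have "AE t in M0. t \<notin> IK ?K"
    using ae
  proof (rule AE_mp, intro AE_I2 impI)
    fix t assume "cmod (H0 (cc t)) \<le> C"
    then show "t \<notin> IK ?K" using H0_lower_IK[of ?K t] lt by auto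
  qed
  then show False by (rule IK_null_contra)
qed

lemma h_unbounded:
  assumes "is_h h"
  shows "\<not> (\<exists>C. AE z in haar_circle. cmod (h z) \<le> C)"
proof
  assume "\<exists>C. AE z in haar_circle. cmod (h z) \<le> C"
  then obtain C where C: "AE z in haar_circle. cmod (h z) \<le> C" by blast
  have "AE z in haar_circle. cmod (H0 z) \<le> C"
    using C is_h_unique[OF assms] by eventually_elim simp
  then have "AE t in M0. cmod (H0 (cc t)) \<le> C" by (rule AE_haar_to_M0)
  then show False using H0_unbounded by blast
qed



lemma m0_iter_measurable[measurable]: "m0_iter n \<in> borel_measurable borel"
  unfolding m0_iter_def m0_def by measurable

lemma alg_V:
  "(8/5::real)^n * ((3/2)^(n+2) / (2 * pi))\<^sup>2 * (1 / (4 * 3^(n+2))) = 9 / (256 * pi\<^sup>2) * (6/5)^n"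
proof -
  have e1: "((3/2::real)^(n+2))\<^sup>2 = (9/4)^(n+2)" by (simp add: power2_eq_square power_mult_distrib[symmetric])
  have "(9/4::real)^(n+2) / 3^(n+2) = ((9/4)/3)^(n+2)" by (rule power_divide[symmetric])
  then have e2: "(9/4::real)^(n+2) / 3^(n+2) = (3/4)^(n+2)" by simp
  have e3: "(8/5::real)^n * (3/4)^(n+2) = 9/16 * (6/5)^n"
    by (simp add: power_mult_distrib[symmetric] power_add)
  have "(8/5::real)^n * ((3/2)^(n+2) / (2 * pi))\<^sup>2 * (1 / (4 * 3^(n+2)))
      = (8/5::real)^n * (((3/2)^(n+2))\<^sup>2 / 3^(n+2)) / (16 * pi\<^sup>2)"
    by (simp add: power_divide power_mult_distrib field_simps)
  also have "\<dots> = (8/5::real)^n * (3/4)^(n+2) / (16 * pi\<^sup>2)" unfolding e1 e2 ..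
  also have "\<dots> = 9 / (256 * pi\<^sup>2) * (6/5)^n" unfolding e3 by simp
  finally show ?thesis .
qed

lemma Q_H0_lower:
  "ennreal (9 / (256 * pi\<^sup>2) * (6/5)^n) \<le> (\<integral>\<^sup>+ t. ennreal ((cmod (m0_iter n (cc t)))\<^sup>2 * (cmod (H0 (cc t)))\<^sup>2) \<partial>M0)"
proof -
  define B where "B = (8/5::real)^n * ((3/2)^(n+2) / (2 * pi))\<^sup>2"
  have B0: "0 \<le> B" unfolding B_def by simp
  have "ennreal (9 / (256 * pi\<^sup>2) * (6/5)^n) = ennreal B * ennreal (1 / (4 * 3^(n+2)))"
  proof -
    have "ennreal B * ennreal (1 / (4 * 3^(n+2))) = ennreal (B * (1 / (4 * 3^(n+2))))"
      using B0 by (intro ennreal_mult[symmetric]) auto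
    also have "B * (1 / (4 * 3^(n+2))) = 9 / (256 * pi\<^sup>2) * (6/5)^n"
      unfolding B_def by (rule alg_V)
    finally show ?thesis by simp
  qed
  also have "\<dots> = ennreal B * emeasure M0 (IK (n+2))" unfolding emeasure_IK ..
  also have "\<dots> = (\<integral>\<^sup>+ t. ennreal B * indicator (IK (n+2)) t \<partial>M0)"
    by (rule nn_integral_cmult_indicator[symmetric, OF IK_sets])
  also have "\<dots> \<le> (\<integral>\<^sup>+ t. ennreal ((cmod (m0_iter n (cc t)))\<^sup>2 * (cmod (H0 (cc t)))\<^sup>2) \<partial>M0)"
  proof (rule nn_integral_mono)
    fix t
    show "ennreal B * indicator (IK (n+2)) t \<le> ennreal ((cmod (m0_iter n (cc t)))\<^sup>2 * (cmod (H0 (cc t)))\<^sup>2)"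
    proof (cases "t \<in> IK (n+2)")
      case False then show ?thesis by simp
    next
      case True
      note th = IK_theta[OF True]
      have tpos: "0 \<le> 2 * pi * t" using th(1) by (smt (verit) divide_nonneg_nonneg pi_gt_zero zero_le_power)
      have "pi / 3^(n+2) \<le> pi / 3^(n+1)" by (intro divide_left_mono power_increasing) auto
      then have m: "(8/5::real)^n \<le> (cmod (m0_iter n (cc t)))\<^sup>2"
        using th(2) tpos by (intro m0_iter_lower) auto
      have hb: "(3/2)^(n+2) / (2 * pi) \<le> cmod (H0 (cc t))"
        by (rule H0_lower_IK[OF _ True]) simp
      have "((3/2)^(n+2) / (2 * pi))\<^sup>2 \<le> (cmod (H0 (cc t)))\<^sup>2"
        using hb by (intro power_mono) auto
      then have "B \<le> (cmod (m0_iter n (cc t)))\<^sup>2 * (cmod (H0 (cc t)))\<^sup>2"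
        unfolding B_def using m by (intro mult_mono) auto
      then show ?thesis using True by (simp add: ennreal_leI)
    qed
  qed
  finally show ?thesis .
qed

lemma Q_h_eq:
  assumes "is_h h"
  shows "(\<integral>\<^sup>+ z. ennreal ((cmod (m0_iter n z))\<^sup>2 * (cmod (h z))\<^sup>2) \<partial>haar_circle)
       = (\<integral>\<^sup>+ t. ennreal ((cmod (m0_iter n (cc t)))\<^sup>2 * (cmod (H0 (cc t)))\<^sup>2) \<partial>M0)"
proof -
  have "(\<integral>\<^sup>+ z. ennreal ((cmod (m0_iter n z))\<^sup>2 * (cmod (h z))\<^sup>2) \<partial>haar_circle)
      = (\<integral>\<^sup>+ z. ennreal ((cmod (m0_iter n z))\<^sup>2 * (cmod (H0 z))\<^sup>2) \<partial>haar_circle)"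
    by (rule nn_integral_cong_AE) (use is_h_unique[OF assms] in \<open>auto elim: AE_mp intro: AE_I2\<close>)
  also have "\<dots> = (\<integral>\<^sup>+ t. ennreal ((cmod (m0_iter n (cc t)))\<^sup>2 * (cmod (H0 (cc t)))\<^sup>2) \<partial>M0)"
    by (rule nn_haar) measurable
  finally show ?thesis .
qed

lemma SUP_Q:
  assumes "is_h h"
  shows "(SUP n. \<integral>\<^sup>+ z. ennreal ((cmod (m0_iter n z))\<^sup>2 * (cmod (h z))\<^sup>2) \<partial>haar_circle) = \<infinity>"
proof -
  have "\<exists>n. x < (\<integral>\<^sup>+ z. ennreal ((cmod (m0_iter n z))\<^sup>2 * (cmod (h z))\<^sup>2) \<partial>haar_circle)" if "x < \<infinity>" for x
  proof -
    obtain r where r: "x = ennreal r" "0 \<le> r" using \<open>x < \<infinity>\<close> by (cases x) auto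
    define c where "c = 9 / (256 * pi\<^sup>2)"
    have c: "0 < c" unfolding c_def by simp
    obtain n where n: "r / c < (6/5::real)^n" using real_arch_pow[of "6/5"] by auto
    then have "r < c * (6/5)^n" using c by (simp add: pos_divide_less_eq mult.commute)
    then have "x < ennreal (c * (6/5)^n)" using r by (simp add: ennreal_lessI)
    also have "\<dots> \<le> (\<integral>\<^sup>+ z. ennreal ((cmod (m0_iter n z))\<^sup>2 * (cmod (h z))\<^sup>2) \<partial>haar_circle)"
      unfolding Q_h_eq[OF assms] c_def by (rule Q_H0_lower)
    finally show ?thesis by blast
  qed
  then show ?thesis by (simp add: SUP_eq_top_iff top_ennreal_def[symmetric])
qed



lemma three_frac:
  fixes x0 x1 x2 b0 b1 b2 N :: real
  assumes nz: "b0 \<noteq> 0" "b1 \<noteq> 0" "b2 \<noteq> 0"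
    and eq: "-4 * (x0 * b1 * b2 + b0 * x1 * b2 + b0 * b1 * x2) = N"
  shows "x0 / b0 + x1 / b1 + x2 / b2 = N / (-4 * b0 * b1 * b2)"
proof -
  have "x0 / b0 + x1 / b1 + x2 / b2 = (x0 * b1 * b2 + b0 * x1 * b2 + b0 * b1 * x2) / (b0 * b1 * b2)"
    using nz by (simp add: field_simps)
  also have "\<dots> = (-4 * (x0 * b1 * b2 + b0 * x1 * b2 + b0 * b1 * x2)) / (-4 * (b0 * b1 * b2))"
    by (subst mult_divide_mult_cancel_left) simp_all
  finally show ?thesis unfolding eq by (simp only: mult.assoc)
qed

lemma I1:
  fixes c s r :: real
  assumes cs: "c\<^sup>2 + s\<^sup>2 = 1" and r: "r\<^sup>2 = 3/4"
    and nz: "s \<noteq> 0" "- s/2 + r*c \<noteq> 0" "- s/2 - r*c \<noteq> 0"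
  shows "c\<^sup>2 / s + (- c/2 - r* s)\<^sup>2 / (- s/2 + r*c) + (- c/2 + r* s)\<^sup>2 / (- s/2 - r*c) = 3 / (3*c\<^sup>2* s - s^3)"
proof -
  have D: "3*c\<^sup>2* s - s^3 = -4 * s * (- s/2 + r*c) * (- s/2 - r*c)"
    using r by algebra
  show ?thesis unfolding D
    by (rule three_frac[OF nz]) (use cs r in algebra)
qed

lemma I2:
  fixes c s r :: real
  assumes cs: "c\<^sup>2 + s\<^sup>2 = 1" and r: "r\<^sup>2 = 3/4"
    and nz: "s \<noteq> 0" "- s/2 + r*c \<noteq> 0" "- s/2 - r*c \<noteq> 0"
  shows "c^3 / s + (- c/2 - r* s)^3 / (- s/2 + r*c) + (- c/2 + r* s)^3 / (- s/2 - r*c) = 3 * (c^3 - 3*c* s\<^sup>2) / (3*c\<^sup>2* s - s^3)"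
proof -
  have D: "3*c\<^sup>2* s - s^3 = -4 * s * (- s/2 + r*c) * (- s/2 - r*c)"
    using r by algebra
  show ?thesis unfolding D
    by (rule three_frac[OF nz]) (use cs r in algebra)
qed

definition om :: complex where "om = Complex (-1/2) (sqrt 3 / 2)"

lemma sqrt3_sq: "sqrt 3 * sqrt 3 = (3::real)" by simp

lemma om_sum: "1 + om + om * om = 0"
  by (simp add: om_def complex_eq_iff sqrt3_sq)

lemma om_cube: "om * om * om = 1"
  by (simp add: om_def complex_eq_iff sqrt3_sq algebra_simps)

lemma om_ne1: "om \<noteq> 1" by (simp add: om_def complex_eq_iff)
lemma om2_ne1: "om * om \<noteq> 1" by (simp add: om_def complex_eq_iff sqrt3_sq)
lemma om2_ne_om: "om * om \<noteq> om" by (simp add: om_def complex_eq_iff sqrt3_sq)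

lemma om_cis: "om = cis (2 * pi / 3)"
  using cos_120' sin_120' by (simp add: om_def complex_eq_iff mult.commute)

lemma cube_factor: "(w - p) * (w - p * om) * (w - p * om * om) = w^3 - p^3"
proof -
  have a: "1 + om + om * om = 0" by (rule om_sum)
  have b: "om * om * om = 1" by (rule om_cube)
  show ?thesis using a b by algebra
qed

lemma cube_roots_set: "{w. w^3 = p^3} = {p, p * om, p * om * om}"
proof -
  have "w^3 = p^3 \<longleftrightarrow> (w - p) * (w - p * om) * (w - p * om * om) = 0" for w
    unfolding cube_factor by simp
  then show ?thesis by auto
qed

lemma R_m0_formula:
  assumes "p \<noteq> 0"
  shows "R_m0 f (p^3) = (1/3) * (complex_of_real ((cmod (m0 p))\<^sup>2) * f p +
      complex_of_real ((cmod (m0 (p * om)))\<^sup>2) * f (p * om) +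
      complex_of_real ((cmod (m0 (p * om * om)))\<^sup>2) * f (p * om * om))"
proof -
  have d1: "p \<noteq> p * om" using assms om_ne1 by auto
  have d2: "p \<noteq> p * om * om" using assms om2_ne1 by (metis mult.assoc mult_cancel_left1)
  have d3: "p * om \<noteq> p * om * om" using assms om2_ne_om by (metis mult.assoc mult_cancel_left)
  show ?thesis unfolding R_m0_def cube_roots_set using d1 d2 d3
    by (simp add: algebra_simps)
qed

lemma m0_sq_unit:
  assumes "cmod w = 1"
  shows "(cmod (m0 w))\<^sup>2 = 2 * (Re w)\<^sup>2"
proof -
  have "w \<noteq> 0" using assms by auto
  then have "cis (Arg w) = w" using assms by (simp add: cis_Arg sgn_div_norm)
  then show ?thesis using m0_cis_sq[of "Arg w"] by (metis cis.sel(1))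
qed

lemma Wc_root:
  assumes z: "cmod z = 1" and w: "w^3 = z"
  shows "Wc w = (Re z + Wc z) / 2"
proof -
  let ?f = "\<lambda>k::nat. (1/2::real)^(k+1) * Re (z^(3^k))"
  have bnd: "\<bar>Re (z^m)\<bar> \<le> 1" for m
    using abs_Re_le_cmod[of "z^m"] z by (simp add: norm_power)
  have sf: "summable ?f"
    by (rule summable_comparison_test[OF _ summable_half]) (auto simp: abs_mult intro!: mult_left_le bnd)
  have sg: "summable (\<lambda>k::nat. (1/2::real)^(k+1) * Re (z^(3^(k+1))))"
    by (rule summable_comparison_test[OF _ summable_half]) (auto simp: abs_mult intro!: mult_left_le bnd)
  have wp: "w^(3^(k+1)) = z^(3^k)" for k
  proof -
    have "w^(3^(k+1)) = w^(3 * 3^k)" by simp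
    also have "\<dots> = (w^3)^(3^k)" by (rule power_mult)
    finally show ?thesis using w by simp
  qed
  have "Wc w = suminf ?f" unfolding Wc_def wp ..
  also have "\<dots> = (\<Sum>k. ?f (Suc k)) + ?f 0"
    using suminf_split_head[OF sf] by simp
  also have "(\<Sum>k. ?f (Suc k)) = (\<Sum>k. (1/2) * ((1/2::real)^(k+1) * Re (z^(3^(k+1)))))"
    by (simp add: algebra_simps)
  also have "\<dots> = (1/2) * Wc z"
    unfolding Wc_def by (rule suminf_mult[OF sg])
  finally show ?thesis by simp
qed



lemma R_H0_pointwise:
  assumes nz: "Im ((cis x)^3) \<noteq> 0"
  shows "R_m0 H0 ((cis x)^3) = H0 ((cis x)^3)"
proof -
  define p where "p = cis x"
  define z where "z = p^3"
  define c where "c = cos x"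
  define s where "s = sin x"
  define r where "r = sqrt 3 / 2"
  have r2: "r\<^sup>2 = 3/4" unfolding r_def by (simp add: power_divide)
  have cs: "c\<^sup>2 + s\<^sup>2 = 1" unfolding c_def s_def by simp
  have p: "p = Complex c s" unfolding p_def c_def s_def by (simp add: complex_eq_iff)
  have pom: "p * om = Complex (- c/2 - r * s) (- s/2 + r * c)"
    unfolding p om_def r_def by (simp add: complex_eq_iff algebra_simps)
  have pom2: "p * om * om = Complex (- c/2 + r * s) (- s/2 - r * c)"
    unfolding p om_def r_def by (simp add: complex_eq_iff algebra_simps sqrt3_sq)
  have zRe: "Re z = c^3 - 3 * c * s\<^sup>2" unfolding z_def p by (simp add: power3_eq_cube power2_eq_square algebra_simps)
  have zIm: "Im z = 3 * c\<^sup>2 * s - s^3" unfolding z_def p by (simp add: power3_eq_cube power2_eq_square algebra_simps)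
  have Imz: "Im z \<noteq> 0" using nz unfolding z_def p_def .
  have D: "3 * c\<^sup>2 * s - s^3 = -4 * s * (- s/2 + r * c) * (- s/2 - r * c)"
    using r2 by algebra
  have nzs: "s \<noteq> 0" "- s/2 + r * c \<noteq> 0" "- s/2 - r * c \<noteq> 0"
    using Imz unfolding zIm D by auto
  have om1: "cmod om = 1" unfolding om_def by (simp add: cmod_def power_divide)
  have p1: "cmod p = 1" unfolding p_def by simp
  have z1: "cmod z = 1" unfolding z_def using p1 by (simp add: norm_power)
  have r0: "p^3 = z" unfolding z_def ..
  have r1: "(p * om)^3 = z" unfolding z_def using om_cube by (simp add: power_mult_distrib power3_eq_cube mult.assoc)
  have r2': "(p * om * om)^3 = z" unfolding z_def using om_cube
    by (simp add: power_mult_distrib power3_eq_cube algebra_simps)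
  define V where "V = (Re z + Wc z) / 2"
  have Hw: "H0 w = \<i> * complex_of_real ((Re w - V) / Im w)" if "w^3 = z" for w
    unfolding H0_def V_def Wc_root[OF z1 that] ..
  have mw: "(cmod (m0 w))\<^sup>2 = 2 * (Re w)\<^sup>2" if "cmod w = 1" for w
    by (rule m0_sq_unit[OF that])
  have n1: "cmod (p * om) = 1" using p1 om1 by (simp add: norm_mult)
  have n2: "cmod (p * om * om) = 1" using p1 om1 by (simp add: norm_mult)
  define a0 where "a0 = c" define b0 where "b0 = s"
  define a1 where "a1 = - c/2 - r * s" define b1 where "b1 = - s/2 + r * c"
  define a2 where "a2 = - c/2 + r * s" define b2 where "b2 = - s/2 - r * c"
  have ri1: "Re p = a0" "Im p = b0" unfolding a0_def b0_def by (simp_all add: p)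
  have ri2: "Re (p * om) = a1" "Im (p * om) = b1" unfolding a1_def b1_def pom by simp_all
  have ri3: "Re (p * om * om) = a2" "Im (p * om * om) = b2" unfolding a2_def b2_def pom2 by simp_all
  note ri = ri1 ri2 ri3
  have "R_m0 H0 z = (1/3) * (complex_of_real ((cmod (m0 p))\<^sup>2) * H0 p +
      complex_of_real ((cmod (m0 (p * om)))\<^sup>2) * H0 (p * om) +
      complex_of_real ((cmod (m0 (p * om * om)))\<^sup>2) * H0 (p * om * om))"
    unfolding z_def by (rule R_m0_formula) (simp add: p_def)
  also have "\<dots> = (1/3) * (complex_of_real (2 * a0\<^sup>2) * (\<i> * complex_of_real ((a0 - V) / b0)) +
      complex_of_real (2 * a1\<^sup>2) * (\<i> * complex_of_real ((a1 - V) / b1)) +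
      complex_of_real (2 * a2\<^sup>2) * (\<i> * complex_of_real ((a2 - V) / b2)))"
    unfolding Hw[OF r0] Hw[OF r1] Hw[OF r2'] mw[OF p1] mw[OF n1] mw[OF n2]
    by (simp only: ri)
  also have "\<dots> = \<i> * complex_of_real ((2/3) * ((a0^3/b0 + a1^3/b1 + a2^3/b2) - V * (a0\<^sup>2/b0 + a1\<^sup>2/b1 + a2\<^sup>2/b2)))"
    by (simp add: algebra_simps power2_eq_square power3_eq_cube diff_divide_distrib)
  also have "a0^3/b0 + a1^3/b1 + a2^3/b2 = 3 * (c^3 - 3 * c * s\<^sup>2) / (3 * c\<^sup>2 * s - s^3)"
    unfolding a0_def b0_def a1_def b1_def a2_def b2_def by (rule I2[OF cs r2 nzs])
  also have "a0\<^sup>2/b0 + a1\<^sup>2/b1 + a2\<^sup>2/b2 = 3 / (3 * c\<^sup>2 * s - s^3)"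
    unfolding a0_def b0_def a1_def b1_def a2_def b2_def by (rule I1[OF cs r2 nzs])
  also have "(2/3) * (3 * (c^3 - 3 * c * s\<^sup>2) / (3 * c\<^sup>2 * s - s^3) - V * (3 / (3 * c\<^sup>2 * s - s^3)))
     = (Re z - Wc z) / Im z"
    unfolding zRe[symmetric] zIm[symmetric] V_def using Imz by (simp add: field_simps)
  also have "\<i> * complex_of_real ((Re z - Wc z) / Im z) = H0 z" unfolding H0_def ..
  finally show ?thesis unfolding z_def p_def .
qed



definition clip :: "real \<Rightarrow> real" where "clip x = max (-1) (min 1 x)"

definition ang :: "complex \<Rightarrow> real" where
  "ang z = (if 0 \<le> Im z then arccos (clip (Re z)) else 2 * pi - arccos (clip (Re z))) / (2 * pi)"

lemma clip_cont: "continuous_on UNIV clip"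
  unfolding clip_def by (intro continuous_intros)

lemma arccos_clip_measurable[measurable]: "(\<lambda>x. arccos (clip x)) \<in> borel_measurable borel"
proof -
  have "continuous_on UNIV (\<lambda>x. arccos (clip x))"
    by (rule continuous_on_arccos[OF clip_cont]) (auto simp: clip_def)
  then show ?thesis by (rule borel_measurable_continuous_onI)
qed

lemma ang_measurable[measurable]: "ang \<in> borel_measurable borel"
  unfolding ang_def by measurable

lemma clip_id: "-1 \<le> x \<Longrightarrow> x \<le> 1 \<Longrightarrow> clip x = x"
  unfolding clip_def by simp

lemma cc_ang:
  assumes "cmod z = 1"
  shows "cc (ang z) = z"
proof -
  have ab: "\<bar>Re z\<bar> \<le> 1" using abs_Re_le_cmod[of z] assms by simp
  then have re: "-1 \<le> Re z" "Re z \<le> 1" by linarith+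
  have sq: "(Re z)\<^sup>2 + (Im z)\<^sup>2 = 1" using assms unfolding cmod_def by simp
  have "1 - (Re z)\<^sup>2 = (Im z)\<^sup>2" using sq by linarith
  then have im: "sqrt (1 - (Re z)\<^sup>2) = \<bar>Im z\<bar>" by (simp only: real_sqrt_abs)
  let ?a = "arccos (Re z)"
  have ca: "cos ?a = Re z" using re by (rule cos_arccos)
  have sa: "sin ?a = \<bar>Im z\<bar>" using sin_arccos_abs[OF ab] im by simp
  have e: "2 * pi * ang z = (if 0 \<le> Im z then ?a else 2 * pi - ?a)"
    unfolding ang_def clip_id[OF re] by simp
  show ?thesis
  proof (cases "0 \<le> Im z")
    case True
    then have "cc (ang z) = cis ?a" using e by simp
    also have "\<dots> = z" using ca sa True by (simp add: complex_eq_iff)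
    finally show ?thesis .
  next
    case False
    then have "cc (ang z) = cis (2 * pi - ?a)" using e by simp
    also have "\<dots> = z" using ca sa False by (simp add: complex_eq_iff)
    finally show ?thesis .
  qed
qed

lemma ang_cc:
  assumes "0 \<le> t" "t < 1"
  shows "ang (cc t) = t"
proof (cases "t \<le> 1/2")
  case True
  have a: "0 \<le> 2 * pi * t" "2 * pi * t \<le> pi" using assms True by auto
  then have "0 \<le> sin (2 * pi * t)" by (rule sin_ge_zero)
  moreover have "arccos (cos (2 * pi * t)) = 2 * pi * t" using a by (rule arccos_cos)
  ultimately show ?thesis unfolding ang_def by (simp add: clip_id)
next
  case False
  have "sin (2 * pi * t) < 0" using assms False by (intro sin_lt_zero) auto
  moreover have "cos (2 * pi * t) = cos (2 * pi - 2 * pi * t)" by simp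
  moreover have "arccos (cos (2 * pi - 2 * pi * t)) = 2 * pi - 2 * pi * t"
    using assms False by (intro arccos_cos) auto
  ultimately show ?thesis unfolding ang_def by (simp add: clip_id)
qed

lemma cmod_cc: "cmod (cc t) = 1" by simp

lemma ang_range: "0 \<le> ang z \<and> ang z \<le> 1"
proof -
  have b: "0 \<le> arccos (clip (Re z)) \<and> arccos (clip (Re z)) \<le> pi"
    by (rule arccos_bounded) (auto simp: clip_def)
  have p: "0 < 2 * pi" by simp
  have "0 \<le> (if 0 \<le> Im z then arccos (clip (Re z)) else 2 * pi - arccos (clip (Re z)))"
    "(if 0 \<le> Im z then arccos (clip (Re z)) else 2 * pi - arccos (clip (Re z))) \<le> 2 * pi"
    using b pi_gt_zero by auto
  then show ?thesis unfolding ang_def using p by (simp add: divide_le_eq)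
qed

lemma AE_haar_of_null:
  assumes S: "S \<in> null_sets lborel" and P: "\<And>t. t \<in> {0..1} \<Longrightarrow> t \<notin> S \<Longrightarrow> P (cc t)"
  shows "AE z in haar_circle. P z"
proof (rule AE_I')
  define N where "N = {z. ang z \<in> S \<or> cmod z \<noteq> 1}"
  have Ssets: "S \<in> sets borel" using S by (simp add: null_sets_def)
  have Nsets: "N \<in> sets borel" unfolding N_def using Ssets by measurable
  have sub: "cc -` N \<inter> space M0 \<subseteq> S \<union> {1}"
  proof
    fix t assume "t \<in> cc -` N \<inter> space M0"
    then have t: "0 \<le> t" "t \<le> 1" "ang (cc t) \<in> S" unfolding N_def by auto
    show "t \<in> S \<union> {1}"
    proof (cases "t = 1")
      case False then have "t < 1" using t by simp
      then show ?thesis using t ang_cc[of t] by simp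
    qed simp
  qed
  have "emeasure haar_circle N = emeasure M0 (cc -` N \<inter> space M0)"
    unfolding haar_circle_def by (rule emeasure_distr[OF cc_measurable]) (simp add: Nsets)
  also have "\<dots> \<le> emeasure M0 ((S \<union> {1}) \<inter> {0..1})"
  proof (rule emeasure_mono)
    show "cc -` N \<inter> space M0 \<subseteq> (S \<union> {1}) \<inter> {0..1}" using sub by auto
    show "(S \<union> {1}) \<inter> {0..1} \<in> sets M0"
      using Ssets by (subst sets_restrict_space_iff) auto
  qed
  also have "\<dots> = emeasure lborel ((S \<union> {1}) \<inter> {0..1})"
    by (rule emeasure_restrict_space) (use Ssets in auto)
  also have "\<dots> = 0"
  proof -
    have "S \<union> {1} \<in> null_sets lborel" using S by (intro null_sets.Un) auto
    then have "(S \<union> {1}) \<inter> {0..1} \<in> null_sets lborel" by (rule null_set_Int2) simp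
    then show ?thesis by (simp only: null_sets_def mem_Collect_eq)
  qed
  finally have "emeasure haar_circle N = 0" by simp
  then show "N \<in> null_sets haar_circle" using Nsets by (simp add: null_sets_def)
  show "{z \<in> space haar_circle. \<not> P z} \<subseteq> N"
  proof
    fix z assume z: "z \<in> {z \<in> space haar_circle. \<not> P z}"
    show "z \<in> N"
    proof (rule ccontr)
      assume "z \<notin> N"
      then have z1: "cmod z = 1" and zs: "ang z \<notin> S" unfolding N_def by auto
      have "0 \<le> ang z" "ang z \<le> 1" using ang_range[of z] by auto
      then have "P (cc (ang z))" using P zs by auto
      then show False using z cc_ang[OF z1] by simp
    qed
  qed
qed



lemma AE_sin_lborel: "AE t in lborel. sin (2 * pi * t) \<noteq> 0"
proof (rule AE_I')
  show "(\<lambda>k::int. real_of_int k / 2) ` UNIV \<in> null_sets lborel"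
    by (intro countable_imp_null_set_lborel countable_image) simp
  show "{t \<in> space lborel. \<not> sin (2 * pi * t) \<noteq> 0} \<subseteq> (\<lambda>k::int. real_of_int k / 2) ` UNIV"
  proof
    fix t assume "t \<in> {t \<in> space lborel. \<not> sin (2 * pi * t) \<noteq> 0}"
    then have "sin ((2 * t) * pi) = 0" by (simp add: mult_ac)
    then have "2 * t \<in> \<int>" by (simp add: sin_times_pi_eq_0)
    then obtain k where "2 * t = real_of_int k" by (auto elim: Ints_cases)
    then show "t \<in> (\<lambda>k::int. real_of_int k / 2) ` UNIV" by (intro image_eqI[of _ _ k]) auto
  qed
qed

lemma R_pointwise_transfer:
  assumes t: "t \<in> {0..1}" and s: "sin (2 * pi * t) \<noteq> 0"
    and e0: "h (cc t) = H0 (cc t)"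
    and e1: "h (cc (0 / 3 + 1/3 * t)) = H0 (cc (0 / 3 + 1/3 * t))"
    and e2: "h (cc (1 / 3 + 1/3 * t)) = H0 (cc (1 / 3 + 1/3 * t))"
    and e3: "h (cc (2 / 3 + 1/3 * t)) = H0 (cc (2 / 3 + 1/3 * t))"
  shows "R_m0 h (cc t) = h (cc t)"
proof -
  define p where "p = cis (2 * pi * t / 3)"
  have a3: "real 3 * (2 * pi * t / 3) = 2 * pi * t" by simp
  have p3: "p^3 = cc t" unfolding p_def Complex.DeMoivre a3 ..
  have p0: "p \<noteq> 0" unfolding p_def by simp
  have q0: "p = cc (0 / 3 + 1/3 * t)" unfolding p_def by (simp add: field_simps)
  have q1: "p * om = cc (1 / 3 + 1/3 * t)" unfolding p_def om_cis cis_mult by (simp add: field_simps)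
  have q2: "p * om * om = cc (2 / 3 + 1/3 * t)" unfolding p_def om_cis cis_mult by (simp add: field_simps)
  have "R_m0 h (cc t) = R_m0 h (p^3)" unfolding p3 ..
  also have "\<dots> = R_m0 H0 (p^3)"
    unfolding R_m0_formula[OF p0] q0[symmetric] using e1 e2 e3 unfolding q0[symmetric] q1[symmetric] q2[symmetric] by simp
  also have "\<dots> = H0 (p^3)" unfolding p_def
    by (rule R_H0_pointwise) (use s p3 in \<open>simp add: p_def\<close>)
  also have "\<dots> = h (cc t)" unfolding p3 using e0 by simp
  finally show ?thesis .
qed

lemma cc_borel[measurable]: "cc \<in> borel_measurable borel"
  by (intro borel_measurable_continuous_onI continuous_intros)

lemma R_h:
  assumes "is_h h"
  shows "AE z in haar_circle. R_m0 h z = h z"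
proof -
  have hm[measurable]: "h \<in> borel_measurable borel" using assms unfolding is_h_def measurable_haar_iff by simp
  have ae1: "AE t in M0. h (cc t) = H0 (cc t)" by (rule AE_haar_to_M0[OF is_h_unique[OF assms]])
  define Q where "Q t \<longleftrightarrow> (t \<in> {0..1} \<longrightarrow> h (cc t) = H0 (cc t))" for t
  have Q: "AE t in lborel. Q t" using ae1 unfolding Q_def by (subst (asm) AE_restrict_space_iff) simp_all
  have Qm: "Measurable.pred borel Q" unfolding Q_def by measurable
  have Qj: "AE t in lborel. Q (j / 3 + 1/3 * t)" for j :: real
    by (rule AE_borel_affine[OF _ Qm Q]) simp
  have all: "AE t in lborel. sin (2 * pi * t) \<noteq> 0 \<and> Q t \<and> Q (0 / 3 + 1/3 * t) \<and> Q (1 / 3 + 1/3 * t) \<and> Q (2 / 3 + 1/3 * t)"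
    using AE_sin_lborel Q Qj[of 0] Qj[of 1] Qj[of 2] by eventually_elim auto
  then obtain S where S: "{t \<in> space lborel. \<not> (sin (2 * pi * t) \<noteq> 0 \<and> Q t \<and> Q (0 / 3 + 1/3 * t) \<and> Q (1 / 3 + 1/3 * t) \<and> Q (2 / 3 + 1/3 * t))} \<subseteq> S"
    "emeasure lborel S = 0" "S \<in> sets lborel" by (rule AE_E)
  have Snull: "S \<in> null_sets lborel" using S by (simp add: null_sets_def)
  show ?thesis
  proof (rule AE_haar_of_null[OF Snull])
    fix t assume t: "t \<in> {0..1}" "t \<notin> S"
    then have c: "sin (2 * pi * t) \<noteq> 0 \<and> Q t \<and> Q (0 / 3 + 1/3 * t) \<and> Q (1 / 3 + 1/3 * t) \<and> Q (2 / 3 + 1/3 * t)"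
      using S(1) by auto
    have i: "0 / 3 + 1/3 * t \<in> {0..1}" "1 / 3 + 1/3 * t \<in> {0..1}" "2 / 3 + 1/3 * t \<in> {0..1}"
      using t(1) by auto
    show "R_m0 h (cc t) = h (cc t)"
      by (rule R_pointwise_transfer[OF t(1)]) (use c i t(1) in \<open>auto simp: Q_def\<close>)
  qed
qed

theorem proposition3p7:
  shows "(\<exists>h. is_h h) \<and>
    (\<forall>h. is_h h \<longrightarrow>
       integrable haar_circle (\<lambda>z. (cmod (h z))\<^sup>2) \<and>
       \<not> (\<exists>C. AE z in haar_circle. cmod (h z) \<le> C) \<and>
       (AE z in haar_circle. R_m0 h z = h z) \<and>
       (SUP n. \<integral>\<^sup>+ z. ennreal ((cmod (m0_iter n z))\<^sup>2 * (cmod (h z))\<^sup>2) \<partial>haar_circle) = \<infinity>)"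
  using is_h_H0 integrable_h_sq h_unbounded R_h SUP_Q by blast


end
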